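(* Under the bounded overflow sharing model, if $k_i\in\{1,2,\dots,N_i\}$ for $i=1,2$, then for each $i\in\{1,2\}$, $$E(N_i+k_{-i},a_i)<B_i^{(bo)}(k_1,k_2)<E(N_i-k_i,a_i).$$
   Context: Two service providers $P_1,P_2$. Provider $P_i$ has $N_i$ servers (a positive integer); its calls arrive as a Poisson process of rate $\lambda_i>0$ with i.i.d. holding times of mean $1/\mu_i<\infty$, all independent; $a_i=\lambda_i/\mu_i$. $E(N,a)=\frac{a^N/N!}{\sum_{j=0}^N a^j/j!}$ is the Erlang-B formula (with $E(0,a)=1$). $-i$ denotes the index other than $i$. $n_i$ is the number of active calls of $P_i$; calls are not attached to specific servers (call repacking). Bounded overflow model with integer parameter $(k_1,k_2)$: an arriving call of $P_{-i}$ is admitted if $n_{-i}<N_{-i}+k_i$ and $n_1+n_2<N_1+N_2$, and blocked otherwise. $B_i^{(bo)}(k_1,k_2)$ is the steady-state probability that an arriving call of $P_i$ is blocked. *)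

theory Defs
  imports Complex_Main
begin

definition erlangB :: "nat \<Rightarrow> real \<Rightarrow> real" where
  "erlangB N a = (a ^ N / fact N) / (\<Sum>j\<le>N. a ^ j / fact j)"

text \<open>Providers are indexed 1 and 2; the other index of i is 3 - i.\<close>
definition other :: "nat \<Rightarrow> nat" where
  "other i = 3 - i"

definition comp :: "nat \<Rightarrow> nat \<times> nat \<Rightarrow> nat" where
  "comp j s = (if j = 1 then fst s else snd s)"

definition bo_admits :: "(nat \<Rightarrow> nat) \<Rightarrow> (nat \<Rightarrow> nat) \<Rightarrow> nat \<Rightarrow> nat \<times> nat \<Rightarrow> bool" where
  "bo_admits N k j s \<longleftrightarrow> comp j s < N j + k (other j) \<and> fst s + snd s < N 1 + N 2"

text \<open>State space of the bounded overflow model (states reachable from (0,0)).\<close>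
definition bo_states :: "(nat \<Rightarrow> nat) \<Rightarrow> (nat \<Rightarrow> nat) \<Rightarrow> (nat \<times> nat) set" where
  "bo_states N k = {(n1, n2). n1 \<le> N 1 + k 2 \<and> n2 \<le> N 2 + k 1 \<and> n1 + n2 \<le> N 1 + N 2}"

text \<open>Unnormalised stationary weight (product form, truncated to the coordinate-convex
  state space; insensitive to the holding-time distribution).\<close>
definition bo_weight :: "(nat \<Rightarrow> real) \<Rightarrow> nat \<times> nat \<Rightarrow> real" where
  "bo_weight a s = (a 1 ^ fst s / fact (fst s)) * (a 2 ^ snd s / fact (snd s))"

text \<open>Steady-state blocking probability of provider i (by PASTA: stationary mass of
  states in which an arriving call of i is not admitted).\<close>
definition bo_block :: "(nat \<Rightarrow> nat) \<Rightarrow> (nat \<Rightarrow> nat) \<Rightarrow> (nat \<Rightarrow> real) \<Rightarrow> nat \<Rightarrow> real" where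
  "bo_block N k a i =
     (\<Sum>s\<in>{s \<in> bo_states N k. \<not> bo_admits N k i s}. bo_weight a s)
     / (\<Sum>s\<in>bo_states N k. bo_weight a s)"

end

theory Submission
  imports Defs
begin

definition GG :: "nat \<Rightarrow> real \<Rightarrow> real" where
  "GG m a = (\<Sum>j\<le>m. a ^ j / fact j)"

lemma GG_pos: "a > 0 \<Longrightarrow> GG m a > 0"
  unfolding GG_def by (rule sum_pos) auto

lemma erlangB_GG: "erlangB m a = (a ^ m / fact m) / GG m a"
  unfolding erlangB_def GG_def by simp

lemma erlangB_GG_mult: "a > 0 \<Longrightarrow> erlangB m a * GG m a = a ^ m / fact m"
  using GG_pos[of a m] by (simp add: erlangB_GG)

lemma GG_step:
  assumes "a > 0"
  shows "a / real (Suc m) * GG m a < GG (Suc m) a"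
proof -
  have "a / real (Suc m) * GG m a = (\<Sum>j\<le>m. a ^ Suc j / (real (Suc m) * fact j))"
    unfolding GG_def sum_distrib_left by (rule sum.cong) (auto simp: field_simps)
  also have "\<dots> \<le> (\<Sum>j\<le>m. a ^ Suc j / fact (Suc j))"
  proof (rule sum_mono)
    fix j assume "j \<in> {..m}"
    then have "real (Suc j) * fact j \<le> real (Suc m) * fact j" by simp
    moreover have "0 < real (Suc j) * fact j" by simp
    ultimately show "a ^ Suc j / (real (Suc m) * fact j) \<le> a ^ Suc j / fact (Suc j)"
      using assms by (simp add: frac_le del: of_nat_Suc)
  qed
  also have "\<dots> < 1 + (\<Sum>j\<le>m. a ^ Suc j / fact (Suc j))" by simp
  also have "\<dots> = GG (Suc m) a"
    unfolding GG_def sum.atMost_Suc_shift[of _ m] by simp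
  finally show ?thesis .
qed

lemma erlangB_Suc_less:
  assumes "a > 0"
  shows "erlangB (Suc m) a < erlangB m a"
proof -
  have g1: "GG m a > 0" "GG (Suc m) a > 0" using GG_pos assms by auto
  have "a ^ Suc m / fact (Suc m) * GG m a < a ^ m / fact m * GG (Suc m) a"
  proof -
    have "a ^ Suc m / fact (Suc m) * GG m a = a ^ m / fact m * (a / real (Suc m) * GG m a)"
      by (simp add: field_simps)
    also have "\<dots> < a ^ m / fact m * GG (Suc m) a"
      using GG_step[OF assms, of m] assms by (intro mult_strict_left_mono) auto
    finally show ?thesis .
  qed
  then show ?thesis using g1 by (simp add: erlangB_GG divide_simps mult_ac)
qed

lemma erlangB_less:
  assumes "a > 0" "m < m'"
  shows "erlangB m' a < erlangB m a"
  using assms(2)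
proof (induction m' rule: less_induct)
  case (less x)
  then obtain y where x: "x = Suc y" and "m \<le> y" by (cases x) auto
  show ?case
  proof (cases "m = y")
    case True then show ?thesis using x erlangB_Suc_less[OF assms(1)] by simp
  next
    case False
    then have "m < y" using \<open>m \<le> y\<close> by simp
    then have "erlangB y a < erlangB m a" using less x by simp
    then show ?thesis using x erlangB_Suc_less[OF assms(1), of y] by simp
  qed
qed

lemma erlangB_le:
  assumes "a > 0" "m \<le> m'"
  shows "erlangB m' a \<le> erlangB m a"
  using erlangB_less[OF assms(1)] assms(2) by (cases "m = m'") (auto simp: less_imp_le)

lemma main1:
  fixes N k :: "nat \<Rightarrow> nat" and a :: "nat \<Rightarrow> real"
  assumes a1: "a 1 > 0" and a2: "a 2 > 0"
    and k1: "1 \<le> k 1" "k 1 \<le> N 1" and k2: "1 \<le> k 2" "k 2 \<le> N 2"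
  shows "erlangB (N 1 + k 2) (a 1) < bo_block N k a 1
       \<and> bo_block N k a 1 < erlangB (N 1 - k 1) (a 1)"
proof -
  define A where "A = N 1 + k 2"
  define B where "B = N 2 + k 1"
  define T where "T = N 1 + N 2"
  define M where "M n2 = min A (T - n2)" for n2
  define c where "c n2 = a 2 ^ n2 / fact n2" for n2
  define L where "L = N 1 - k 1"
  have states: "bo_states N k = (\<lambda>(n2,n1). (n1,n2)) ` (SIGMA n2:{..B}. {..M n2})"
    unfolding bo_states_def A_def B_def T_def M_def
    using k1 by (auto simp: image_iff)
  have blocked: "{s \<in> bo_states N k. \<not> bo_admits N k 1 s} = (\<lambda>n2. (M n2, n2)) ` {..B}"
    unfolding bo_states_def bo_admits_def comp_def other_def A_def B_def T_def M_def
    using k1 k2 by (auto simp: image_iff)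
  have inj: "inj_on (\<lambda>(n2::nat,n1::nat). (n1,n2)) X" for X by (auto simp: inj_on_def)
  have D: "(\<Sum>s\<in>bo_states N k. bo_weight a s) = (\<Sum>n2\<le>B. c n2 * GG (M n2) (a 1))"
  proof -
    have "(\<Sum>s\<in>bo_states N k. bo_weight a s) = (\<Sum>(n2,n1)\<in>(SIGMA n2:{..B}. {..M n2}). bo_weight a (n1,n2))"
      unfolding states sum.reindex[OF inj] by (simp add: comp_def case_prod_unfold)
    also have "\<dots> = (\<Sum>n2\<le>B. \<Sum>n1\<le>M n2. bo_weight a (n1,n2))"
      by (subst sum.Sigma) auto
    also have "\<dots> = (\<Sum>n2\<le>B. c n2 * GG (M n2) (a 1))"
      by (simp add: GG_def c_def bo_weight_def sum_distrib_left mult.commute)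
    finally show ?thesis .
  qed
  have Nu: "(\<Sum>s\<in>{s \<in> bo_states N k. \<not> bo_admits N k 1 s}. bo_weight a s)
      = (\<Sum>n2\<le>B. c n2 * (erlangB (M n2) (a 1) * GG (M n2) (a 1)))"
    unfolding blocked erlangB_GG_mult[OF a1]
    by (subst sum.reindex) (auto simp: inj_on_def c_def bo_weight_def mult.commute)
  have cpos: "c n > 0" for n unfolding c_def using a2 by simp
  have Gpos: "GG m (a 1) > 0" for m using GG_pos a1 by simp
  have Mrange: "L \<le> M n \<and> M n \<le> A" if "n \<le> B" for n
    using that k1 k2 unfolding M_def L_def A_def B_def T_def by auto
  have M0: "M 0 = A" unfolding M_def A_def T_def using k2 by auto
  have MB: "M B = L" unfolding M_def A_def T_def L_def B_def using k1 by auto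
  have LA: "L < A" unfolding L_def A_def using k1 k2 by auto
  have Dpos: "(\<Sum>n2\<le>B. c n2 * GG (M n2) (a 1)) > 0"
    by (rule sum_pos) (use cpos Gpos in auto)
  have lo: "erlangB A (a 1) * (\<Sum>n2\<le>B. c n2 * GG (M n2) (a 1))
      < (\<Sum>n2\<le>B. c n2 * (erlangB (M n2) (a 1) * GG (M n2) (a 1)))"
    unfolding sum_distrib_left
  proof (rule sum_strict_mono_ex1)
    show "\<forall>x\<in>{..B}. erlangB A (a 1) * (c x * GG (M x) (a 1))
        \<le> c x * (erlangB (M x) (a 1) * GG (M x) (a 1))"
    proof
      fix x assume "x \<in> {..B}"
      then have "erlangB A (a 1) \<le> erlangB (M x) (a 1)" using Mrange erlangB_le[OF a1] by auto
      then show "erlangB A (a 1) * (c x * GG (M x) (a 1))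
        \<le> c x * (erlangB (M x) (a 1) * GG (M x) (a 1))"
        using cpos[of x] Gpos[of "M x"]
        by (metis mult.left_commute mult_right_mono less_imp_le mult_pos_pos)
    qed
    have "erlangB A (a 1) < erlangB (M B) (a 1)" using MB LA erlangB_less[OF a1] by simp
    then show "\<exists>x\<in>{..B}. erlangB A (a 1) * (c x * GG (M x) (a 1))
        < c x * (erlangB (M x) (a 1) * GG (M x) (a 1))"
      using cpos[of B] Gpos[of "M B"]
      by (intro bexI[of _ B]) (auto simp: mult.left_commute)
  qed simp
  have hi: "(\<Sum>n2\<le>B. c n2 * (erlangB (M n2) (a 1) * GG (M n2) (a 1)))
      < erlangB L (a 1) * (\<Sum>n2\<le>B. c n2 * GG (M n2) (a 1))"
    unfolding sum_distrib_left
  proof (rule sum_strict_mono_ex1)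
    show "\<forall>x\<in>{..B}. c x * (erlangB (M x) (a 1) * GG (M x) (a 1))
        \<le> erlangB L (a 1) * (c x * GG (M x) (a 1))"
    proof
      fix x assume "x \<in> {..B}"
      then have "erlangB (M x) (a 1) \<le> erlangB L (a 1)" using Mrange erlangB_le[OF a1] by auto
      then show "c x * (erlangB (M x) (a 1) * GG (M x) (a 1))
        \<le> erlangB L (a 1) * (c x * GG (M x) (a 1))"
        using cpos[of x] Gpos[of "M x"]
        by (metis mult.left_commute mult_right_mono less_imp_le mult_pos_pos)
    qed
    have "erlangB (M 0) (a 1) < erlangB L (a 1)" using M0 LA erlangB_less[OF a1] by simp
    then show "\<exists>x\<in>{..B}. c x * (erlangB (M x) (a 1) * GG (M x) (a 1))
        < erlangB L (a 1) * (c x * GG (M x) (a 1))"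
      using cpos[of 0] Gpos[of "M 0"]
      by (intro bexI[of _ 0]) (auto simp: mult.left_commute)
  qed simp
  have bb: "bo_block N k a 1 = (\<Sum>n2\<le>B. c n2 * (erlangB (M n2) (a 1) * GG (M n2) (a 1)))
      / (\<Sum>n2\<le>B. c n2 * GG (M n2) (a 1))"
    unfolding bo_block_def D Nu ..
  show ?thesis
    unfolding bb A_def[symmetric] L_def[symmetric]
    using lo hi Dpos by (simp add: divide_simps)
qed


lemma swap_block:
  "bo_block N k a 2 = bo_block (N \<circ> other) (k \<circ> other) (a \<circ> other) 1"
proof -
  let ?sw = "\<lambda>(x::nat,y::nat). (y,x)"
  have inj: "inj_on ?sw X" for X by (auto simp: inj_on_def)
  have st: "bo_states (N \<circ> other) (k \<circ> other) = ?sw ` bo_states N k"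
    by (auto simp: bo_states_def other_def image_iff)
  have bl: "{s \<in> bo_states (N \<circ> other) (k \<circ> other). \<not> bo_admits (N \<circ> other) (k \<circ> other) 1 s}
      = ?sw ` {s \<in> bo_states N k. \<not> bo_admits N k 2 s}"
    by (auto simp: bo_states_def bo_admits_def comp_def other_def image_iff)
  have w: "bo_weight (a \<circ> other) \<circ> ?sw = bo_weight a"
    by (rule ext, simp add: bo_weight_def other_def mult_ac split_beta)
  show ?thesis
    unfolding bo_block_def bl unfolding st sum.reindex[OF inj] w ..
qed

theorem lemma11:
  fixes N :: "nat \<Rightarrow> nat" and k :: "nat \<Rightarrow> nat" and lam mu :: "nat \<Rightarrow> real" and i :: nat
  assumes "\<forall>j\<in>{1,2}. N j > 0 \<and> lam j > 0 \<and> mu j > 0"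
    and "\<forall>j\<in>{1,2}. k j \<in> {1..N j}"
    and "i \<in> {1,2}"
  shows "erlangB (N i + k (other i)) (lam i / mu i) < bo_block N k (\<lambda>j. lam j / mu j) i
       \<and> bo_block N k (\<lambda>j. lam j / mu j) i < erlangB (N i - k i) (lam i / mu i)"
proof -
  have p1: "lam 1 / mu 1 > 0" "lam 2 / mu 2 > 0" using assms(1) by auto
  have kk: "1 \<le> k 1" "k 1 \<le> N 1" "1 \<le> k 2" "k 2 \<le> N 2" using assms(2) by auto
  show ?thesis
  proof (cases "i = 1")
    case True
    then show ?thesis using main1[of "\<lambda>j. lam j / mu j" k N] p1 kk by (simp add: other_def)
  next
    case False
    then have i2: "i = 2" using assms(3) by auto
    have o: "other 1 = 2" "other 2 = 1" by (simp_all add: other_def)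
    have "erlangB ((N \<circ> other) 1 + (k \<circ> other) 2) (((\<lambda>j. lam j / mu j) \<circ> other) 1)
          < bo_block (N \<circ> other) (k \<circ> other) ((\<lambda>j. lam j / mu j) \<circ> other) 1 \<and>
          bo_block (N \<circ> other) (k \<circ> other) ((\<lambda>j. lam j / mu j) \<circ> other) 1
          < erlangB ((N \<circ> other) 1 - (k \<circ> other) 1) (((\<lambda>j. lam j / mu j) \<circ> other) 1)"
      by (rule main1) (use p1 kk o in auto)
    then show ?thesis unfolding swap_block[symmetric] i2 using o by simp
  qed
qed

end
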